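(* Let $T$ be a search tree on a finite tree $\mathcal{T}$ and let $\mathcal{H}$ be a nonempty connected subgraph of $\mathcal{T}$. Then there is a unique search tree $T|_{\mathcal{H}}$ on $\mathcal{H}$ such that for every $v\in V(\mathcal{H})$, $$\mathtt{Path}_{T|_{\mathcal{H}}}(v)=\mathtt{Path}_T(v)\cap V(\mathcal{H}).$$
   Context: A search tree on a tree $\mathcal{T}$ is a rooted tree $T$ with vertex set $V(\mathcal{T})$ defined recursively: its root is an arbitrary vertex $r$, and the children of $r$ are the roots of search trees built on the connected components of $\mathcal{T}-r$; a single-vertex tree has only itself as search tree. For a rooted tree $T$ and vertex $v$, $\mathtt{Path}_T(v)$ is the set of vertices on the path in $T$ from the root to $v$, including both endpoints. *)

theory Defs
  imports Main
begin

definition is_graph :: "'a set \<Rightarrow> ('a \<Rightarrow> 'a \<Rightarrow> bool) \<Rightarrow> bool" where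
  "is_graph V E \<longleftrightarrow> (\<forall>x y. E x y \<longrightarrow> x \<in> V \<and> y \<in> V \<and> x \<noteq> y \<and> E y x)"

definition reach :: "'a set \<Rightarrow> ('a \<Rightarrow> 'a \<Rightarrow> bool) \<Rightarrow> 'a \<Rightarrow> 'a \<Rightarrow> bool" where
  "reach S E = (\<lambda>x y. x \<in> S \<and> y \<in> S \<and> E x y)\<^sup>*\<^sup>*"

definition connected_graph :: "'a set \<Rightarrow> ('a \<Rightarrow> 'a \<Rightarrow> bool) \<Rightarrow> bool" where
  "connected_graph S E \<longleftrightarrow> (\<forall>x\<in>S. \<forall>y\<in>S. reach S E x y)"

definition is_cycle :: "'a set \<Rightarrow> ('a \<Rightarrow> 'a \<Rightarrow> bool) \<Rightarrow> 'a list \<Rightarrow> bool" where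
  "is_cycle V E cs \<longleftrightarrow> length cs \<ge> 3 \<and> distinct cs \<and> set cs \<subseteq> V \<and>
     (\<forall>i < length cs - 1. E (cs ! i) (cs ! Suc i)) \<and> E (last cs) (hd cs)"

definition is_tree :: "'a set \<Rightarrow> ('a \<Rightarrow> 'a \<Rightarrow> bool) \<Rightarrow> bool" where
  "is_tree V E \<longleftrightarrow> finite V \<and> V \<noteq> {} \<and> is_graph V E \<and> connected_graph V E \<and>
     \<not> (\<exists>cs. is_cycle V E cs)"

definition is_subgraph :: "'a set \<Rightarrow> ('a \<Rightarrow> 'a \<Rightarrow> bool) \<Rightarrow> 'a set \<Rightarrow> ('a \<Rightarrow> 'a \<Rightarrow> bool) \<Rightarrow> bool" where
  "is_subgraph W F V E \<longleftrightarrow> W \<subseteq> V \<and> is_graph W F \<and> (\<forall>x y. F x y \<longrightarrow> E x y)"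

definition components :: "'a set \<Rightarrow> ('a \<Rightarrow> 'a \<Rightarrow> bool) \<Rightarrow> 'a set set" where
  "components S E = {{y. reach S E x y} | x. x \<in> S}"

text \<open>Rooted trees are represented by a parent map: par v = None for the root and
for all vertices outside the vertex set, par v = Some u if u is the parent of v.
search_tree V E par: par is a search tree on the graph (V,E): a root r in V,
and the children of r are the roots of search trees on the components of
(V,E) - r.\<close>
inductive search_tree :: "'a set \<Rightarrow> ('a \<Rightarrow> 'a \<Rightarrow> bool) \<Rightarrow> ('a \<Rightarrow> 'a option) \<Rightarrow> bool" where
  step: "\<lbrakk> r \<in> V;
          \<forall>v. v \<notin> V \<longrightarrow> par v = None;
          par r = None;
          \<forall>C \<in> components (V - {r}) E.
             \<exists>p. search_tree C E p \<and>
                 (\<forall>v \<in> C. par v = (case p v of None \<Rightarrow> Some r | Some u \<Rightarrow> Some u)) \<rbrakk>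
         \<Longrightarrow> search_tree V E par"

definition Path :: "('a \<Rightarrow> 'a option) \<Rightarrow> 'a \<Rightarrow> 'a set" where
  "Path par v = {u. (\<lambda>x y. par x = Some y)\<^sup>*\<^sup>* v u}"

end

theory Submission
  imports Defs
begin

lemma reach_in: "reach S E x y \<Longrightarrow> x \<in> S \<Longrightarrow> y \<in> S"
  unfolding reach_def by (induction rule: rtranclp_induct) auto

lemma reach_trans: "reach S E x y \<Longrightarrow> reach S E y z \<Longrightarrow> reach S E x z"
  unfolding reach_def by auto

lemma reach_sym: assumes "\<forall>x y. E x y \<longrightarrow> E y x" "reach S E x y" shows "reach S E y x"
  using assms(2) unfolding reach_def
proof (induction rule: rtranclp_induct)
  case (step y z) then show ?case using assms(1)
    by (metis (mono_tags, lifting) converse_rtranclp_into_rtranclp)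
qed auto

lemma reach_mono: "S \<subseteq> S' \<Longrightarrow> (\<forall>x y. F x y \<longrightarrow> E x y) \<Longrightarrow> reach S F x y \<Longrightarrow> reach S' E x y"
  unfolding reach_def by (erule rtranclp_mono[THEN predicate2D, rotated]) auto

lemma reach_step: "x \<in> S \<Longrightarrow> y \<in> S \<Longrightarrow> E x y \<Longrightarrow> reach S E x y"
  unfolding reach_def by auto

lemma reach_refl: "reach S E x x"
  unfolding reach_def by auto

lemma reach_restrict:
  assumes "reach S F x y" "x \<in> D" "D = {z. reach S F x0 z}"
  shows "reach D F x y"
  using assms(1) unfolding reach_def
proof (induction rule: rtranclp_induct)
  case base then show ?case by auto
next
  case (step y z)
  have "y \<in> D" using reach_in[OF step(3)[folded reach_def] assms(2)] .
  then have "reach S F x0 y" using assms(3) by auto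
  then have "reach S F x0 z" using step(2) reach_trans reach_step by metis
  then have "z \<in> D" using assms(3) by auto
  then show ?case using step \<open>y \<in> D\<close> by (simp add: rtranclp.rtrancl_into_rtrancl)
qed

lemma comp_connected:
  assumes "\<forall>x y. F x y \<longrightarrow> F y x" "D = {z. reach S F x0 z}"
  shows "connected_graph D F"
  unfolding connected_graph_def
proof (intro ballI)
  fix x y assume "x \<in> D" "y \<in> D"
  then have "reach S F x0 x" "reach S F x0 y" using assms(2) by auto
  then have "reach S F x x0" using assms(1) reach_sym by metis
  then have "reach S F x y" using \<open>reach S F x0 y\<close> reach_trans by metis
  then show "reach D F x y" using reach_restrict[OF _ \<open>x \<in> D\<close> assms(2)] by blast
qed

fun walk :: "('a \<Rightarrow> 'a \<Rightarrow> bool) \<Rightarrow> 'a list \<Rightarrow> bool" where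
  "walk E [] = True"
| "walk E [x] = True"
| "walk E (x # y # xs) = (E x y \<and> walk E (y # xs))"

lemma walk_idx: "walk E xs \<Longrightarrow> i < length xs - 1 \<Longrightarrow> E (xs ! i) (xs ! Suc i)"
proof (induction E xs arbitrary: i rule: walk.induct)
  case (3 E x y xs) then show ?case by (cases i) auto
qed auto

lemma walk_tl: "walk E (x # xs) \<Longrightarrow> walk E xs"
  by (cases xs) auto

lemma walk_suffix: "walk E (ys @ zs) \<Longrightarrow> walk E zs"
proof (induction ys)
  case (Cons a ys) then show ?case using walk_tl[of E a "ys @ zs"] by simp
qed simp

lemma walk_cons: "walk E xs \<Longrightarrow> xs \<noteq> [] \<Longrightarrow> E a (hd xs) \<Longrightarrow> walk E (a # xs)"
  by (cases xs) auto

lemma reach_path: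
  assumes "reach S E a b" "a \<in> S"
  shows "\<exists>xs. xs \<noteq> [] \<and> hd xs = a \<and> last xs = b \<and> distinct xs \<and> set xs \<subseteq> S \<and> walk E xs"
  using assms unfolding reach_def
proof (induction rule: converse_rtranclp_induct)
  case base then show ?case by (intro exI[of _ "[b]"]) auto
next
  case (step a a')
  then obtain xs where xs: "xs \<noteq> [] \<and> hd xs = a' \<and> last xs = b \<and> distinct xs \<and> set xs \<subseteq> S \<and> walk E xs"
    by auto
  show ?case
  proof (cases "a \<in> set xs")
    case True
    then obtain ys zs where yz: "xs = ys @ a # zs" by (meson split_list)
    have "walk E (a # zs)" using xs yz walk_suffix[of E ys "a # zs"] by simp
    moreover have "last (a # zs) = b" using xs yz by simp
    moreover have "distinct (a # zs)" using xs yz by simp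
    moreover have "set (a # zs) \<subseteq> S" using xs yz by auto
    ultimately show ?thesis by (intro exI[of _ "a # zs"]) simp
  next
    case False
    have "walk E (a # xs)" using xs step(1) walk_cons[of E xs a] by simp
    moreover have "last (a # xs) = b" using xs by simp
    moreover have "distinct (a # xs)" using xs False by simp
    moreover have "set (a # xs) \<subseteq> S" using xs step(1) by auto
    ultimately show ?thesis by (intro exI[of _ "a # xs"]) simp
  qed
qed

lemma no_two_branches:
  assumes sym: "\<forall>x y. E x y \<longrightarrow> E y x" and nc: "\<not> (\<exists>cs. is_cycle V E cs)"
    and "r \<in> V" "E r a" "E r b" "a \<noteq> b" "reach (V - {r}) E a b" "a \<in> V - {r}"
  shows False
proof -
  obtain xs where xs: "xs \<noteq> [] \<and> hd xs = a \<and> last xs = b \<and> distinct xs \<and> set xs \<subseteq> V - {r} \<and> walk E xs"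
    using reach_path[OF assms(7,8)] by auto
  have len: "length xs \<ge> 2"
  proof (rule ccontr)
    assume "\<not> length xs \<ge> 2"
    moreover have "length xs \<noteq> 0" using xs by simp
    ultimately have "length xs = 1" by linarith
    then obtain x where "xs = [x]" by (metis One_nat_def length_0_conv length_Suc_conv)
    then have "a = b" using xs by (metis last_ConsL list.sel(1))
    with assms(6) show False by simp
  qed
  let ?cs = "r # xs"
  have "E r (hd xs)" using xs assms(4) by simp
  then have w: "walk E ?cs" using walk_cons[of E xs r] xs by simp
  have sub: "set xs \<subseteq> V - {r}" using xs by simp
  have "is_cycle V E ?cs"
    unfolding is_cycle_def
  proof (intro conjI allI impI)
    show "3 \<le> length ?cs" using len by simp
    have "r \<notin> set xs" using sub by blast
    then show "distinct ?cs" using xs by simp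
    show "set ?cs \<subseteq> V" using sub assms(3) by auto
    have "last ?cs = b" using xs by simp
    moreover have "E b r" using sym assms(5) by blast
    ultimately show "E (last ?cs) (hd ?cs)" by simp
  next
    fix i assume "i < length ?cs - 1"
    then show "E (?cs ! i) (?cs ! Suc i)" by (rule walk_idx[OF w])
  qed
  with nc show False by blast
qed


abbreviation pr :: "('a \<Rightarrow> 'a option) \<Rightarrow> 'a \<Rightarrow> 'a \<Rightarrow> bool" where
  "pr par \<equiv> (\<lambda>x y. par x = Some y)"

lemma st_none: "search_tree V E par \<Longrightarrow> v \<notin> V \<Longrightarrow> par v = None"
  by (erule search_tree.cases) auto

lemma comp_sub: "C \<in> components S E \<Longrightarrow> C \<subseteq> S"
  unfolding components_def using reach_in by fastforce

lemma comp_of: "x \<in> S \<Longrightarrow> {y. reach S E x y} \<in> components S E"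
  unfolding components_def by blast

lemma comp_mem: "x \<in> S \<Longrightarrow> x \<in> {y. reach S E x y}"
  by (simp add: reach_refl)

lemma st_parent_in: "search_tree V E par \<Longrightarrow> par v = Some u \<Longrightarrow> u \<in> V \<and> v \<in> V"
proof (induction arbitrary: v u rule: search_tree.induct)
  case (step r V par E)
  have vV: "v \<in> V" using step(2) step(5) by force
  have "v \<noteq> r" using step(3) step(5) by force
  let ?C = "{y. reach (V - {r}) E v y}"
  have C: "?C \<in> components (V - {r}) E" using vV \<open>v \<noteq> r\<close> by (intro comp_of) simp
  have vC: "v \<in> ?C" by (simp add: reach_refl)
  obtain p where p: "search_tree ?C E p" "\<And>v u. p v = Some u \<Longrightarrow> u \<in> ?C \<and> v \<in> ?C"
    "\<forall>x\<in>?C. par x = (case p x of None \<Rightarrow> Some r | Some u \<Rightarrow> Some u)"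
    using bspec[OF step(4) C] by blast
  have CV: "?C \<subseteq> V" using comp_sub[OF C] by blast
  show ?case
  proof (cases "p v")
    case None then show ?thesis using p(3) vC step(1,5) vV by auto
  next
    case (Some u') then show ?thesis using p(2)[OF Some] p(3) vC step(5) CV vV by auto
  qed
qed


lemma st_chain_in:
  assumes "search_tree V E par" shows "(pr par)\<^sup>*\<^sup>* v u \<Longrightarrow> v \<in> V \<Longrightarrow> u \<in> V"
proof (induction rule: rtranclp_induct)
  case (step y z)
  then have "par y = Some z" by simp
  from st_parent_in[OF assms this] show ?case by (rule conjunct1)
qed simp

lemma Path_None: "par v = None \<Longrightarrow> Path par v = {v}"
  unfolding Path_def by (auto elim: converse_rtranclpE)

lemma Path_refl: "v \<in> Path par v"
  unfolding Path_def by simp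

lemma lift:
  assumes "\<forall>x\<in>C. \<forall>y. p x = Some y \<longrightarrow> par x = Some y" "\<forall>x y. p x = Some y \<longrightarrow> y \<in> C"
    "v \<in> C"
  shows "(pr p)\<^sup>*\<^sup>* v u \<Longrightarrow> (pr par)\<^sup>*\<^sup>* v u \<and> u \<in> C"
proof (induction rule: rtranclp_induct)
  case base then show ?case using assms(3) by simp
next
  case (step y z)
  then have "par y = Some z" using assms(1) by blast
  moreover have "z \<in> C" using step(2) assms(2) by blast
  moreover have "(pr par)\<^sup>*\<^sup>* v y" using step(3) by simp
  ultimately show ?case using rtranclp.rtrancl_into_rtrancl[of "pr par" v y z] by simp
qed

lemma st_root: "search_tree V E par \<Longrightarrow>
   \<exists>r\<in>V. par r = None \<and> (\<forall>v\<in>V. (pr par)\<^sup>*\<^sup>* v r) \<and> (\<forall>v\<in>V. par v = None \<longrightarrow> v = r)"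
proof (induction rule: search_tree.induct)
  case (step r V par E)
  have A: "(pr par)\<^sup>*\<^sup>* v r \<and> par v \<noteq> None" if vV: "v \<in> V" "v \<noteq> r" for v
  proof -
    let ?C = "{y. reach (V - {r}) E v y}"
    have C: "?C \<in> components (V - {r}) E" using vV by (intro comp_of) simp
    have vC: "v \<in> ?C" by (simp add: reach_refl)
    obtain p where p: "search_tree ?C E p"
      "\<exists>r'\<in>?C. p r' = None \<and> (\<forall>v\<in>?C. (pr p)\<^sup>*\<^sup>* v r') \<and> (\<forall>v\<in>?C. p v = None \<longrightarrow> v = r')"
      "\<forall>x\<in>?C. par x = (case p x of None \<Rightarrow> Some r | Some u \<Rightarrow> Some u)"
      using bspec[OF step(4) C] by blast
    obtain r' where r': "r' \<in> ?C" "p r' = None" "(pr p)\<^sup>*\<^sup>* v r'" using p(2) vC by blast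
    have l1: "\<forall>x\<in>?C. \<forall>y. p x = Some y \<longrightarrow> par x = Some y" using p(3) by simp
    have l2: "\<forall>x y. p x = Some y \<longrightarrow> y \<in> ?C" using st_parent_in[OF p(1)] by blast
    have "(pr par)\<^sup>*\<^sup>* v r'" using lift[OF l1 l2 vC r'(3)] by blast
    moreover have "par r' = Some r" using p(3) r'(1,2) by simp
    ultimately have "(pr par)\<^sup>*\<^sup>* v r" by (simp add: rtranclp.rtrancl_into_rtrancl)
    moreover have "par v \<noteq> None" using p(3) vC by (cases "p v") auto
    ultimately show ?thesis by simp
  qed
  show ?case
  proof (rule bexI[of _ r], intro conjI ballI impI)
    show "par r = None" by fact
    show "r \<in> V" by fact
  next
    fix v assume "v \<in> V" then show "(pr par)\<^sup>*\<^sup>* v r" using A by (cases "v = r") auto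
  next
    fix v assume "v \<in> V" "par v = None" then show "v = r" using A by blast
  qed
qed

lemma path_combine:
  assumes st: "search_tree C E p" and vC: "v \<in> C" and pr: "par r = None"
    and ag: "\<forall>x\<in>C. par x = (case p x of None \<Rightarrow> Some r | Some u \<Rightarrow> Some u)" and rC: "r \<notin> C"
  shows "Path par v = insert r (Path p v)"
proof -
  have l1: "\<forall>x\<in>C. \<forall>y. p x = Some y \<longrightarrow> par x = Some y" using ag by simp
  have l2: "\<forall>x y. p x = Some y \<longrightarrow> y \<in> C" using st_parent_in[OF st] by blast
  have H: "(pr par)\<^sup>*\<^sup>* v u \<Longrightarrow> (pr p)\<^sup>*\<^sup>* v u \<or> u = r" for u
  proof (induction rule: rtranclp_induct)
    case base then show ?case by simp
  next
    case (step y z)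
    show ?case
    proof (cases "y = r")
      case True then show ?thesis using step(2) pr by simp
    next
      case False
      then have py: "(pr p)\<^sup>*\<^sup>* v y" using step(3) by simp
      then have "y \<in> C" using st_chain_in[OF st py vC] by simp
      then have pyq: "par y = (case p y of None \<Rightarrow> Some r | Some u \<Rightarrow> Some u)" using ag by blast
      show ?thesis
      proof (cases "p y")
        case None
        then show ?thesis using step(2) pyq by simp
      next
        case (Some w)
        then have "z = w" using step(2) pyq by simp
        then show ?thesis using rtranclp.rtrancl_into_rtrancl[of "pr p" v y z, OF py] Some by simp
      qed
    qed
  qed
  have s1: "Path par v \<subseteq> insert r (Path p v)"
  proof
    fix u assume "u \<in> Path par v"
    then have "(pr par)\<^sup>*\<^sup>* v u" unfolding Path_def by simp
    from H[OF this] show "u \<in> insert r (Path p v)" unfolding Path_def by auto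
  qed
  have s2: "Path p v \<subseteq> Path par v" unfolding Path_def using lift[OF l1 l2 vC] by blast
  obtain r' where r': "r' \<in> C" "p r' = None" "(pr p)\<^sup>*\<^sup>* v r'" using st_root[OF st] vC by blast
  have "(pr par)\<^sup>*\<^sup>* v r'" using lift[OF l1 l2 vC r'(3)] by blast
  moreover have "par r' = Some r" using ag r'(1,2) by simp
  ultimately have "(pr par)\<^sup>*\<^sup>* v r" by (simp add: rtranclp.rtrancl_into_rtrancl)
  then have "r \<in> Path par v" unfolding Path_def by simp
  with s1 s2 show ?thesis by (simp add: subset_antisym)
qed

lemma Path_sub: "search_tree C E p \<Longrightarrow> v \<in> C \<Longrightarrow> Path p v \<subseteq> C"
proof
  fix u assume "search_tree C E p" "v \<in> C" "u \<in> Path p v"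
  then show "u \<in> C" unfolding Path_def using st_chain_in[of C E p v u] by simp
qed


lemma exit_lemma:
  assumes "r \<in> W" "connected_graph W F" "x \<in> W" "x \<noteq> r"
  shows "\<exists>d. reach (W - {r}) F x d \<and> F d r"
proof -
  have "reach W F x r" using assms unfolding connected_graph_def by blast
  then have "(\<lambda>x y. x \<in> W \<and> y \<in> W \<and> F x y)\<^sup>*\<^sup>* x r" unfolding reach_def by simp
  then have "x \<noteq> r \<longrightarrow> (\<exists>d. reach (W - {r}) F x d \<and> F d r)"
  proof (induction rule: converse_rtranclp_induct)
    case base then show ?case by simp
  next
    case (step x y)
    show ?case
    proof (cases "y = r")
      case True then show ?thesis using step(1) reach_refl by metis
    next
      case False
      then obtain d where d: "reach (W - {r}) F y d" "F d r" using step(3) by blast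
      have "reach (W - {r}) F x y" if "x \<noteq> r" using step(1) False that by (intro reach_step) auto
      then show ?thesis using d reach_trans by metis
    qed
  qed
  then show ?thesis using assms(4) by simp
qed

lemma key:
  assumes Esym: "\<forall>x y. E x y \<longrightarrow> E y x" and nc: "\<not> (\<exists>cs. is_cycle V E cs)"
    and rV: "r \<in> V" and rW: "r \<in> W" and WV: "W \<subseteq> V" and Fsym: "\<forall>x y. F x y \<longrightarrow> F y x"
    and FE: "\<forall>x y. F x y \<longrightarrow> E x y" and conn: "connected_graph W F"
    and x: "x \<in> W" "x \<noteq> r" and y: "y \<in> W" "y \<noteq> r" and rxy: "reach (V - {r}) E x y"
  shows "reach (W - {r}) F x y"
proof (rule ccontr)
  assume nr: "\<not> reach (W - {r}) F x y"
  obtain d1 where d1: "reach (W - {r}) F x d1" "F d1 r" using exit_lemma[OF rW conn x] by blast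
  obtain d2 where d2: "reach (W - {r}) F y d2" "F d2 r" using exit_lemma[OF rW conn y] by blast
  have sub: "W - {r} \<subseteq> V - {r}" using WV by blast
  have "reach (W - {r}) F d2 y" using reach_sym[OF Fsym d2(1)] .
  have "d1 \<noteq> d2"
  proof
    assume "d1 = d2"
    then have "reach (W - {r}) F x y" using d1(1) \<open>reach (W - {r}) F d2 y\<close> reach_trans by metis
    with nr show False by simp
  qed
  have a: "reach (V - {r}) E d1 x" using reach_mono[OF sub FE reach_sym[OF Fsym d1(1)]] .
  have b: "reach (V - {r}) E y d2" using reach_mono[OF sub FE d2(1)] .
  have "reach (V - {r}) E d1 d2" using reach_trans[OF reach_trans[OF a rxy] b] .
  moreover have "E r d1" "E r d2" using d1(2) d2(2) FE Esym by blast+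
  moreover have "d1 \<in> V - {r}"
  proof -
    have "x \<in> W - {r}" using x by simp
    then have "d1 \<in> W - {r}" using reach_in[OF d1(1)] by simp
    then show ?thesis using WV by blast
  qed
  ultimately show False using no_two_branches[OF Esym nc rV _ _ \<open>d1 \<noteq> d2\<close>] by blast
qed

lemma nocyc_sub: "C \<subseteq> V \<Longrightarrow> \<not> (\<exists>cs. is_cycle V E cs) \<Longrightarrow> \<not> (\<exists>cs. is_cycle C E cs)"
  unfolding is_cycle_def by blast

lemma comp_eq:
  assumes "\<forall>x y. F x y \<longrightarrow> F y x" "v \<in> {y. reach S F x0 y}"
  shows "{y. reach S F v y} = {y. reach S F x0 y}"
proof -
  have a: "reach S F x0 v" using assms(2) by simp
  have b: "reach S F v x0" using reach_sym[OF assms(1) a] .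
  show ?thesis
  proof (intro equalityI subsetI)
    fix y assume "y \<in> {y. reach S F v y}"
    then show "y \<in> {y. reach S F x0 y}" using reach_trans[OF a] by simp
  next
    fix y assume "y \<in> {y. reach S F x0 y}"
    then show "y \<in> {y. reach S F v y}" using reach_trans[OF b] by simp
  qed
qed


lemma main:
  "search_tree V E par \<Longrightarrow> \<forall>x y. E x y \<longrightarrow> E y x \<Longrightarrow> \<not> (\<exists>cs. is_cycle V E cs) \<Longrightarrow> W \<subseteq> V \<Longrightarrow>
   \<forall>x y. F x y \<longrightarrow> F y x \<Longrightarrow> \<forall>x y. F x y \<longrightarrow> E x y \<Longrightarrow> W \<noteq> {} \<Longrightarrow> connected_graph W F \<Longrightarrow>
   \<exists>q. search_tree W F q \<and> (\<forall>v\<in>W. Path q v = Path par v \<inter> W)"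
proof (induction arbitrary: W F rule: search_tree.induct)
  case (step r V par E W F)
  note Esym = step(5) and nc = step(6) and WV = step(7) and Fsym = step(8) and FE = step(9)
    and Wne = step(10) and conn = step(11)
  have getp: "\<exists>p. search_tree C E p \<and>
     (\<forall>W'. W' \<subseteq> C \<longrightarrow> W' \<noteq> {} \<longrightarrow> connected_graph W' F \<longrightarrow>
        (\<exists>q. search_tree W' F q \<and> (\<forall>v\<in>W'. Path q v = Path p v \<inter> W'))) \<and>
     (\<forall>v\<in>C. par v = (case p v of None \<Rightarrow> Some r | Some u \<Rightarrow> Some u))"
    if C: "C \<in> components (V - {r}) E" for C
  proof -
    obtain p where p: "search_tree C E p"
      "(\<forall>x y. E x y \<longrightarrow> E y x) \<longrightarrow>
           (\<nexists>a. is_cycle C E a) \<longrightarrow>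
           (\<forall>x\<subseteq>C. \<forall>xa. (\<forall>x y. xa x y \<longrightarrow> xa y x) \<longrightarrow>
                       (\<forall>x y. xa x y \<longrightarrow> E x y) \<longrightarrow>
                       x \<noteq> {} \<longrightarrow>
                       connected_graph x xa \<longrightarrow>
                       (\<exists>q. search_tree x xa q \<and>
                            (\<forall>v\<in>x. Path q v = Path p v \<inter> x)))"
      "\<forall>v\<in>C. par v = (case p v of None \<Rightarrow> Some r | Some u \<Rightarrow> Some u)"
      using bspec[OF step(4) C] by blast
    have CV: "C \<subseteq> V" using comp_sub[OF C] by blast
    have ncC: "\<nexists>a. is_cycle C E a" using nocyc_sub[OF CV nc] .
    have "\<forall>W'. W' \<subseteq> C \<longrightarrow> W' \<noteq> {} \<longrightarrow> connected_graph W' F \<longrightarrow>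
        (\<exists>q. search_tree W' F q \<and> (\<forall>v\<in>W'. Path q v = Path p v \<inter> W'))"
    proof (intro allI impI)
      fix W' assume "W' \<subseteq> C" "W' \<noteq> {}" "connected_graph W' F"
      then show "\<exists>q. search_tree W' F q \<and> (\<forall>v\<in>W'. Path q v = Path p v \<inter> W')"
        using p(2) Esym ncC Fsym FE by blast
    qed
    with p(1,3) show ?thesis by blast
  qed
  show ?case
  proof (cases "r \<in> W")
    case False
    obtain w0 where w0: "w0 \<in> W" using Wne by blast
    let ?C = "{y. reach (V - {r}) E w0 y}"
    have w0V: "w0 \<in> V - {r}" using w0 False WV by blast
    have C: "?C \<in> components (V - {r}) E" using comp_of[OF w0V] .
    have CVr: "?C \<subseteq> V - {r}" using comp_sub[OF C] .
    have WVr: "W \<subseteq> V - {r}" using WV False by blast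
    have WC: "W \<subseteq> ?C"
    proof
      fix w assume "w \<in> W"
      then have "reach W F w0 w" using conn w0 unfolding connected_graph_def by blast
      then have "reach (V - {r}) E w0 w" using reach_mono[OF WVr FE] by blast
      then show "w \<in> ?C" by simp
    qed
    obtain p where p: "search_tree ?C E p"
      "\<forall>W'. W' \<subseteq> ?C \<longrightarrow> W' \<noteq> {} \<longrightarrow> connected_graph W' F \<longrightarrow>
        (\<exists>q. search_tree W' F q \<and> (\<forall>v\<in>W'. Path q v = Path p v \<inter> W'))"
      "\<forall>v\<in>?C. par v = (case p v of None \<Rightarrow> Some r | Some u \<Rightarrow> Some u)"
      using getp[OF C] by blast
    obtain q where q: "search_tree W F q" "\<forall>v\<in>W. Path q v = Path p v \<inter> W"
      using p(2) WC Wne conn by blast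
    have rC: "r \<notin> ?C" using CVr by blast
    have "Path q v = Path par v \<inter> W" if "v \<in> W" for v
    proof -
      have vC: "v \<in> ?C" using WC that by blast
      have "Path par v = insert r (Path p v)" using path_combine[OF p(1) vC step(3) p(3) rC] .
      then show ?thesis using q(2) that False by auto
    qed
    then show ?thesis using q(1) by blast
  next
    case True
    have Dprop: "\<exists>q. search_tree D F q \<and> (\<forall>v\<in>D. Path q v = Path par v \<inter> W - {r} \<and> r \<in> Path par v)"
      if D: "D \<in> components (W - {r}) F" for D
    proof -
      obtain x0 where x0: "x0 \<in> W - {r}" and Dx0: "D = {y. reach (W - {r}) F x0 y}"
        using D unfolding components_def by blast
      have x0V: "x0 \<in> V - {r}" using x0 WV by blast
      let ?C = "{y. reach (V - {r}) E x0 y}"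
      have C: "?C \<in> components (V - {r}) E" using comp_of[OF x0V] .
      have CVr: "?C \<subseteq> V - {r}" using comp_sub[OF C] .
      have rC: "r \<notin> ?C" using CVr by blast
      have WVr: "W - {r} \<subseteq> V - {r}" using WV by blast
      have DW: "D \<subseteq> W - {r}" using comp_sub[OF D] .
      have DC: "D \<subseteq> ?C"
      proof
        fix w assume "w \<in> D"
        then have "reach (W - {r}) F x0 w" using Dx0 by simp
        then have "reach (V - {r}) E x0 w" using reach_mono[OF WVr FE] by blast
        then show "w \<in> ?C" by simp
      qed
      have Dne: "D \<noteq> {}" using Dx0 reach_refl[of "W - {r}" F x0] by blast
      have Dconn: "connected_graph D F" using comp_connected[OF Fsym Dx0] .
      obtain p where p: "search_tree ?C E p"
        "\<forall>W'. W' \<subseteq> ?C \<longrightarrow> W' \<noteq> {} \<longrightarrow> connected_graph W' F \<longrightarrow>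
          (\<exists>q. search_tree W' F q \<and> (\<forall>v\<in>W'. Path q v = Path p v \<inter> W'))"
        "\<forall>v\<in>?C. par v = (case p v of None \<Rightarrow> Some r | Some u \<Rightarrow> Some u)"
        using getp[OF C] by blast
      obtain q where q: "search_tree D F q" "\<forall>v\<in>D. Path q v = Path p v \<inter> D"
        using p(2) DC Dne Dconn by blast
      have "Path q v = Path par v \<inter> W - {r} \<and> r \<in> Path par v" if vD: "v \<in> D" for v
      proof -
        have vC: "v \<in> ?C" using DC vD by blast
        have Pv: "Path par v = insert r (Path p v)" using path_combine[OF p(1) vC step(3) p(3) rC] .
        have PC: "Path p v \<subseteq> ?C" using Path_sub[OF p(1) vC] .
        have "Path p v \<inter> W \<subseteq> D"
        proof
          fix u assume u: "u \<in> Path p v \<inter> W"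
          then have uC: "u \<in> ?C" using PC by blast
          then have ur: "u \<noteq> r" using rC by blast
          have a: "reach (V - {r}) E x0 v" using vC by simp
          have b: "reach (V - {r}) E x0 u" using uC by simp
          have "reach (V - {r}) E v u" using reach_trans[OF reach_sym[OF Esym a] b] .
          moreover have "v \<in> W" "v \<noteq> r" using vD DW by blast+
          moreover have "u \<in> W" using u by blast
          ultimately have "reach (W - {r}) F v u"
            using key[OF Esym nc step(1) True WV Fsym FE conn] ur by blast
          moreover have "reach (W - {r}) F x0 v" using vD Dx0 by simp
          ultimately have "reach (W - {r}) F x0 u" using reach_trans by metis
          then show "u \<in> D" using Dx0 by simp
        qed
        moreover have "D \<subseteq> W" using DW by blast
        moreover have "r \<notin> Path p v" using PC rC by blast
        ultimately have "Path p v \<inter> D = Path par v \<inter> W - {r}" using Pv by blast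
        then show ?thesis using q(2) vD Pv by simp
      qed
      then show ?thesis using q(1) by blast
    qed
    then have "\<forall>D\<in>components (W - {r}) F. \<exists>q. search_tree D F q \<and>
       (\<forall>v\<in>D. Path q v = Path par v \<inter> W - {r} \<and> r \<in> Path par v)" by blast
    from bchoice[OF this] obtain Q where Q0: "\<forall>D\<in>components (W - {r}) F. search_tree D F (Q D) \<and>
       (\<forall>v\<in>D. Path (Q D) v = Path par v \<inter> W - {r} \<and> r \<in> Path par v)"
      by (elim exE)
    have Q: "search_tree D F (Q D) \<and>
       (\<forall>v\<in>D. Path (Q D) v = Path par v \<inter> W - {r} \<and> r \<in> Path par v)"
      if "D \<in> components (W - {r}) F" for D using Q0 that by (rule bspec)
    define cw where "cw v = {y. reach (W - {r}) F v y}" for v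
    define q where "q v = (if v \<in> W - {r} then (case Q (cw v) v of None \<Rightarrow> Some r | Some u \<Rightarrow> Some u) else None)" for v
    have cwD: "cw v = D" if D: "D \<in> components (W - {r}) F" and vD: "v \<in> D" for v D
    proof -
      obtain x0 where "D = {y. reach (W - {r}) F x0 y}"
        using D unfolding components_def by blast
      then show ?thesis using comp_eq[OF Fsym, of v "W - {r}" x0] vD unfolding cw_def by simp
    qed
    have qagree: "\<forall>v\<in>D. q v = (case Q D v of None \<Rightarrow> Some r | Some u \<Rightarrow> Some u)"
      if D: "D \<in> components (W - {r}) F" for D
    proof
      fix v assume vD: "v \<in> D"
      have "v \<in> W - {r}" using comp_sub[OF D] vD by blast
      then show "q v = (case Q D v of None \<Rightarrow> Some r | Some u \<Rightarrow> Some u)"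
        unfolding q_def using cwD[OF D vD] by simp
    qed
    have qr: "q r = None" unfolding q_def by simp
    have qst: "search_tree W F q"
    proof (rule search_tree.step[of r])
      show "r \<in> W" by fact
      show "\<forall>v. v \<notin> W \<longrightarrow> q v = None" unfolding q_def by simp
      show "q r = None" by (rule qr)
      show "\<forall>C\<in>components (W - {r}) F. \<exists>p. search_tree C F p \<and>
          (\<forall>v\<in>C. q v = (case p v of None \<Rightarrow> Some r | Some u \<Rightarrow> Some u))"
      proof
        fix C assume C: "C \<in> components (W - {r}) F"
        show "\<exists>p. search_tree C F p \<and> (\<forall>v\<in>C. q v = (case p v of None \<Rightarrow> Some r | Some u \<Rightarrow> Some u))"
          using Q[OF C] qagree[OF C] by blast
      qed
    qed
    have "Path q v = Path par v \<inter> W" if vW: "v \<in> W" for v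
    proof (cases "v = r")
      case vr: True
      have "Path q v = {v}" "Path par v = {v}" using Path_None[of q r, OF qr] Path_None[of par r, OF step(3)] vr by simp_all
      then show ?thesis using vW by simp
    next
      case False
      then have vW': "v \<in> W - {r}" using vW by simp
      let ?D = "cw v"
      have D: "?D \<in> components (W - {r}) F" unfolding cw_def using comp_of[OF vW'] .
      have vD: "v \<in> ?D" unfolding cw_def by (simp add: reach_refl)
      have rD: "r \<notin> ?D" using comp_sub[OF D] by blast
      have "Path q v = insert r (Path (Q ?D) v)"
        using path_combine[OF conjunct1[OF Q[OF D]] vD qr qagree[OF D] rD] .
      moreover have "Path (Q ?D) v = Path par v \<inter> W - {r}" "r \<in> Path par v"
        using Q[OF D] vD by blast+
      moreover have "r \<in> Path par v \<inter> W" using True \<open>r \<in> Path par v\<close> by simp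
      ultimately show ?thesis using insert_Diff[of r "Path par v \<inter> W"] by simp
    qed
    then show ?thesis using qst by blast
  qed
qed


lemma uniq:
  "search_tree V E q1 \<Longrightarrow> search_tree V E q2 \<Longrightarrow> \<forall>v\<in>V. Path q1 v = Path q2 v \<Longrightarrow> q1 = q2"
proof (induction arbitrary: q2 rule: search_tree.induct)
  case (step r V q1 E q2)
  have st1: "search_tree V E q1"
  proof (rule search_tree.step[of r])
    show "r \<in> V" "\<forall>v. v \<notin> V \<longrightarrow> q1 v = None" "q1 r = None" using step(1-3) by auto
    show "\<forall>C\<in>components (V - {r}) E. \<exists>p. search_tree C E p \<and>
          (\<forall>v\<in>C. q1 v = (case p v of None \<Rightarrow> Some r | Some u \<Rightarrow> Some u))"
    proof
      fix C assume C: "C \<in> components (V - {r}) E"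
      from bspec[OF step(4) C] show "\<exists>p. search_tree C E p \<and>
          (\<forall>v\<in>C. q1 v = (case p v of None \<Rightarrow> Some r | Some u \<Rightarrow> Some u))" by blast
    qed
  qed
  obtain r2 where r2: "r2 \<in> V" "\<forall>v. v \<notin> V \<longrightarrow> q2 v = None" "q2 r2 = None"
    "\<forall>C\<in>components (V - {r2}) E. \<exists>p. search_tree C E p \<and>
          (\<forall>v\<in>C. q2 v = (case p v of None \<Rightarrow> Some r2 | Some u \<Rightarrow> Some u))"
    using step(5) by (cases rule: search_tree.cases) blast
  obtain r0 where r0: "r0 \<in> V" "q1 r0 = None" "\<forall>v\<in>V. (pr q1)\<^sup>*\<^sup>* v r0" "\<forall>v\<in>V. q1 v = None \<longrightarrow> v = r0"
    using st_root[OF st1] by blast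
  have "Path q1 r2 = {r2}" using step(6) r2(1) Path_None[of q2 r2, OF r2(3)] by simp
  moreover have "r0 \<in> Path q1 r2" using r0(3) r2(1) unfolding Path_def by simp
  ultimately have "r0 = r2" by simp
  moreover have "r = r0" using r0(4) step(1,3) by simp
  ultimately have rr: "r2 = r" by simp
  show ?case
  proof
    fix v
    show "q1 v = q2 v"
    proof (cases "v \<in> V - {r}")
      case False
      then show ?thesis using step(2,3) r2(2,3) rr by auto
    next
      case True
      let ?C = "{y. reach (V - {r}) E v y}"
      have C: "?C \<in> components (V - {r}) E" using comp_of[OF True] .
      have vC: "v \<in> ?C" by (simp add: reach_refl)
      have rC: "r \<notin> ?C" using comp_sub[OF C] by blast
      obtain p1 where p1: "search_tree ?C E p1"
        "\<forall>q2. search_tree ?C E q2 \<longrightarrow> (\<forall>v\<in>?C. Path p1 v = Path q2 v) \<longrightarrow> p1 = q2"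
        "\<forall>v\<in>?C. q1 v = (case p1 v of None \<Rightarrow> Some r | Some u \<Rightarrow> Some u)"
        using bspec[OF step(4) C] by blast
      obtain p2 where p2: "search_tree ?C E p2"
        "\<forall>v\<in>?C. q2 v = (case p2 v of None \<Rightarrow> Some r | Some u \<Rightarrow> Some u)"
        using bspec[OF r2(4)[unfolded rr] C] by blast
      have q2r: "q2 r = None" using r2(3) rr by simp
      have "Path p1 u = Path p2 u" if uC: "u \<in> ?C" for u
      proof -
        have "insert r (Path p1 u) = Path q1 u" using path_combine[OF p1(1) uC step(3) p1(3) rC] by simp
        also have "\<dots> = Path q2 u" using step(6) uC comp_sub[OF C] by blast
        also have "\<dots> = insert r (Path p2 u)" using path_combine[OF p2(1) uC q2r p2(2) rC] .
        finally have "insert r (Path p1 u) = insert r (Path p2 u)" .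
        moreover have "r \<notin> Path p1 u" using Path_sub[OF p1(1) uC] rC by blast
        moreover have "r \<notin> Path p2 u" using Path_sub[OF p2(1) uC] rC by blast
        ultimately show ?thesis by (metis insert_ident)
      qed
      then have "p1 = p2" using p1(2) p2(1) by blast
      then show ?thesis using p1(3) p2(2) vC by simp
    qed
  qed
qed

theorem mainTheorem13:
  fixes V W :: "'a set" and E F :: "'a \<Rightarrow> 'a \<Rightarrow> bool" and par :: "'a \<Rightarrow> 'a option"
  assumes "is_tree V E"
    and "search_tree V E par"
    and "is_subgraph W F V E"
    and "W \<noteq> {}"
    and "connected_graph W F"
  shows "\<exists>!q. search_tree W F q \<and> (\<forall>v \<in> W. Path q v = Path par v \<inter> W)"
proof -
  have Esym: "\<forall>x y. E x y \<longrightarrow> E y x" and nc: "\<not> (\<exists>cs. is_cycle V E cs)"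
    using assms(1) unfolding is_tree_def is_graph_def by blast+
  have WV: "W \<subseteq> V" and Fsym: "\<forall>x y. F x y \<longrightarrow> F y x" and FE: "\<forall>x y. F x y \<longrightarrow> E x y"
    using assms(3) unfolding is_subgraph_def is_graph_def by blast+
  obtain q where q: "search_tree W F q" "\<forall>v\<in>W. Path q v = Path par v \<inter> W"
    using main[OF assms(2) Esym nc WV Fsym FE assms(4,5)] by blast
  show ?thesis
  proof (rule ex1I[of _ q])
    show "search_tree W F q \<and> (\<forall>v\<in>W. Path q v = Path par v \<inter> W)" using q by blast
  next
    fix q' assume q': "search_tree W F q' \<and> (\<forall>v\<in>W. Path q' v = Path par v \<inter> W)"
    then have "\<forall>v\<in>W. Path q' v = Path q v" using q(2) by simp
    then show "q' = q" using uniq q' q(1) by blast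
  qed
qed

end
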